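(* Let $r,s$ be positive integers, $d=rs$, $\lambda>0$ and $0<\delta\le2/5$. Let $\theta^0\in\mathbb R^d$ be the vector with all entries $1/2$. For $k\in[s]$ let $I_k=\{(k-1)r+1,\dots,kr\}$ and let $\theta^k\in\mathbb R^d$ have entries $\theta^k_i=1/2+\delta$ for $i\in I_k$ and $\theta^k_i=1/2$ otherwise. Let $w$ be drawn uniformly at random from $\{\theta^k\}_{k\in[s]}$. Then \[ \chi^2\big(\mathbb G(w)\,\|\,\mathbb G(\theta^0)\big)\le\frac{2\lambda\delta^2r}{s}\quad\text{provided }\lambda\delta^2r\le2/5, \] and \[ \chi^2\big(\mathbb V(w)\,\|\,\mathbb V(\theta^0)\big)\le\frac{8\lambda\delta^2r}{s}\quad\text{provided }\lambda\delta^2r\le1/10. \]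
   Context: For a vector $U\in\mathbb R^d$, $\mathbb G(U)$ denotes the law of the following observations: counts $\kappa_1,\dots,\kappa_d$ i.i.d. $\mathrm{Poi}(\lambda)$, and, conditionally on them, for each $i$, $\kappa_i$ independent samples from $\mathcal N(U_i,1)$ (all independent). $\mathbb V(U)$ (for $U\in[0,1]^d$) is defined identically with $\mathrm{Ber}(U_i)$ samples in place of $\mathcal N(U_i,1)$. For a random vector $w$, $\mathbb G(w)$ (resp. $\mathbb V(w)$) denotes the mixture obtained by first drawing $w$ and then observations from $\mathbb G(w)$ (resp. $\mathbb V(w)$). $\chi^2$ denotes the chi-square divergence. *)

theory Defs
  imports "HOL-Probability.Probability"
begin

definition chi_square :: "'a measure \<Rightarrow> 'a measure \<Rightarrow> ennreal" where
  "chi_square P Q =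
     (if sets P = sets Q \<and> absolutely_continuous Q P
      then (\<integral>\<^sup>+ x. (RN_deriv Q P x)^2 \<partial>Q) - 1
      else \<infinity>)"

text \<open>The observation is the pair (kappa, Y) where Y i j is the j-th sample of
  coordinate i for j < kappa i, and the fixed filler z otherwise (unobserved).\<close>
definition poi_obs :: "real \<Rightarrow> nat \<Rightarrow> 'b measure \<Rightarrow> (nat \<Rightarrow> 'b measure) \<Rightarrow> 'b
    \<Rightarrow> ((nat \<Rightarrow> nat) \<times> (nat \<Rightarrow> nat \<Rightarrow> 'b)) measure" where
  "poi_obs lam d S D z =
     distr
       ((\<Pi>\<^sub>M i\<in>{..<d}. measure_pmf (poisson_pmf lam)) \<Otimes>\<^sub>M
        (\<Pi>\<^sub>M i\<in>{..<d}. \<Pi>\<^sub>M j\<in>(UNIV::nat set). D i))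
       ((\<Pi>\<^sub>M i\<in>{..<d}. count_space (UNIV::nat set)) \<Otimes>\<^sub>M
        (\<Pi>\<^sub>M i\<in>{..<d}. \<Pi>\<^sub>M j\<in>(UNIV::nat set). S))
       (\<lambda>(\<kappa>, X). (\<kappa>, \<lambda>i\<in>{..<d}. \<lambda>j. if j < \<kappa> i then X i j else z))"

definition G_law :: "real \<Rightarrow> nat \<Rightarrow> (nat \<Rightarrow> real)
    \<Rightarrow> ((nat \<Rightarrow> nat) \<times> (nat \<Rightarrow> nat \<Rightarrow> real)) measure" where
  "G_law lam d U = poi_obs lam d lborel (\<lambda>i. density lborel (normal_density (U i) 1)) 0"

text \<open>V(U): Bernoulli samples Ber(U_i) (valued in bool, True = 1).\<close>
definition V_law :: "real \<Rightarrow> nat \<Rightarrow> (nat \<Rightarrow> real)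
    \<Rightarrow> ((nat \<Rightarrow> nat) \<times> (nat \<Rightarrow> nat \<Rightarrow> bool)) measure" where
  "V_law lam d U = poi_obs lam d (count_space UNIV) (\<lambda>i. measure_pmf (bernoulli_pmf (U i))) False"

definition mixture :: "'c pmf \<Rightarrow> ('c \<Rightarrow> 'a measure) \<Rightarrow> 'a measure" where
  "mixture p L = measure_pmf p \<bind> L"

text \<open>theta^0 and theta^k (k = 1..s), coordinates 0-based: I_k = {(k-1)r ..< kr}.\<close>
definition theta0 :: "nat \<Rightarrow> real" where
  "theta0 i = 1/2"

definition theta :: "nat \<Rightarrow> real \<Rightarrow> nat \<Rightarrow> nat \<Rightarrow> real" where
  "theta r \<delta> k i = (if (k - 1) * r \<le> i \<and> i < k * r then 1/2 + \<delta> else 1/2)"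

end

theory Submission
  imports Defs
begin

definition padn :: "'b \<Rightarrow> nat \<Rightarrow> (nat \<Rightarrow> 'b) \<Rightarrow> (nat \<Rightarrow> 'b)" where
  "padn z n Y = (\<lambda>j. if j < n then Y j else z)"

lemma measurable_padn[measurable]:
  "padn z n \<in> measurable (PiM J (\<lambda>_. S)) (PiM UNIV (\<lambda>_. S))" if "{..<n} \<subseteq> J" "z \<in> space S"
proof -
  have "padn z n = (\<lambda>Y. \<lambda>j\<in>UNIV. if j < n then Y j else z)" by (auto simp: padn_def fun_eq_iff)
  moreover have "(\<lambda>Y. \<lambda>j\<in>UNIV. if j < n then Y j else z) \<in> measurable (PiM J (\<lambda>_. S)) (PiM UNIV (\<lambda>_. S))"
  proof (intro measurable_restrict)
    fix j :: nat
    show "(\<lambda>Y. if j < n then Y j else z) \<in> measurable (PiM J (\<lambda>_. S)) S"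
      using that by (cases "j < n") (auto intro!: measurable_component_singleton)
  qed
  ultimately show ?thesis by simp
qed

lemma measurable_padn'[measurable]:
  "padn z n \<in> measurable (PiM J (\<lambda>_. M)) (PiM UNIV (\<lambda>_. S))"
  if "{..<n} \<subseteq> J" "z \<in> space S" "sets M = sets S"
proof -
  have "sets (PiM J (\<lambda>_. M)) = sets (PiM J (\<lambda>_. S))" using that by (intro sets_PiM_cong) auto
  then show ?thesis using measurable_padn[OF that(1,2)] by (simp cong: measurable_cong_sets)
qed

definition hmap :: "'b \<Rightarrow> nat \<Rightarrow> (nat \<Rightarrow> nat) \<Rightarrow> (nat \<Rightarrow> nat \<Rightarrow> 'b) \<Rightarrow> (nat \<Rightarrow> nat \<Rightarrow> 'b)" where
  "hmap z d \<kappa> X = (\<lambda>i\<in>{..<d}. padn z (\<kappa> i) (X i))"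

definition Cm :: "nat \<Rightarrow> 'b measure \<Rightarrow> (nat \<Rightarrow> 'b measure) \<Rightarrow> 'b \<Rightarrow> (nat \<Rightarrow> nat) \<Rightarrow> (nat \<Rightarrow> nat \<Rightarrow> 'b) measure" where
  "Cm d S D z \<kappa> = (PiM {..<d} (\<lambda>i. distr (PiM {..<\<kappa> i} (\<lambda>_. D i)) (PiM UNIV (\<lambda>_. S)) (padn z (\<kappa> i))))"

lemma padn_restrict: "padn z n (restrict Y {..<n}) = padn z n Y"
  by (auto simp: padn_def fun_eq_iff)

lemma distr_pad_UNIV:
  assumes "prob_space M" "sets M = sets S" "z \<in> space S"
  shows "distr (PiM UNIV (\<lambda>_. M)) (PiM UNIV (\<lambda>_. S)) (padn z n) =
         distr (PiM {..<n} (\<lambda>_. M)) (PiM UNIV (\<lambda>_. S)) (padn z n)"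
proof -
  interpret product_prob_space "\<lambda>_. M" UNIV
    using assms(1) by (simp add: product_prob_space_def product_prob_space_axioms_def product_sigma_finite_def prob_space_imp_sigma_finite)
  have "PiM {..<n} (\<lambda>_. M) = distr (PiM UNIV (\<lambda>_. M)) (PiM {..<n} (\<lambda>_. M)) (\<lambda>x. restrict x {..<n})"
    by (rule distr_PiM_restrict_finite[symmetric]) auto
  then have "distr (PiM {..<n} (\<lambda>_. M)) (PiM UNIV (\<lambda>_. S)) (padn z n) =
     distr (PiM UNIV (\<lambda>_. M)) (PiM UNIV (\<lambda>_. S)) (\<lambda>x. padn z n (restrict x {..<n}))"
  proof -
    have "distr (distr (PiM UNIV (\<lambda>_. M)) (PiM {..<n} (\<lambda>_. M)) (\<lambda>x. restrict x {..<n})) (PiM UNIV (\<lambda>_. S)) (padn z n)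
      = distr (PiM UNIV (\<lambda>_. M)) (PiM UNIV (\<lambda>_. S)) (padn z n \<circ> (\<lambda>x. restrict x {..<n}))"
      by (rule distr_distr) (use assms in \<open>auto intro!: measurable_restrict_subset\<close>)
    then show ?thesis using \<open>PiM {..<n} (\<lambda>_. M) = _\<close> by (simp add: comp_def)
  qed
  then show ?thesis by (simp add: padn_restrict)
qed

lemma measurable_hmap[measurable]:
  assumes "\<And>i. sets (D i) = sets S" "z \<in> space S"
  shows "hmap z d \<kappa> \<in> measurable (PiM {..<d} (\<lambda>i. PiM UNIV (\<lambda>_. D i))) (PiM {..<d} (\<lambda>i. PiM UNIV (\<lambda>_. S)))"
  unfolding hmap_def
proof (intro measurable_restrict)
  fix i assume "i \<in> {..<d}"
  have "(\<lambda>X. X i) \<in> measurable (PiM {..<d} (\<lambda>i. PiM UNIV (\<lambda>_. D i))) (PiM UNIV (\<lambda>_. D i))"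
    using \<open>i \<in> _\<close> by (rule measurable_component_singleton)
  moreover have "padn z (\<kappa> i) \<in> measurable (PiM UNIV (\<lambda>_. D i)) (PiM UNIV (\<lambda>_. S))"
    using assms by (intro measurable_padn') auto
  ultimately show "(\<lambda>X. padn z (\<kappa> i) (X i)) \<in> measurable (PiM {..<d} (\<lambda>i. PiM UNIV (\<lambda>_. D i))) (PiM UNIV (\<lambda>_. S))"
    by (rule measurable_compose)
qed

lemma prob_space_PiM_UNIV: "prob_space M \<Longrightarrow> prob_space (PiM I (\<lambda>_. M))"
  by (intro prob_space_PiM) auto

lemma C_eq:
  assumes P: "\<And>i. prob_space (D i)" and SS: "\<And>i. sets (D i) = sets S" and z: "z \<in> space S"
  shows "distr (PiM {..<d} (\<lambda>i. PiM UNIV (\<lambda>_. D i))) (PiM {..<d} (\<lambda>i. PiM UNIV (\<lambda>_. S))) (hmap z d \<kappa>)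
         = Cm d S D z \<kappa>"
  unfolding Cm_def
proof (rule product_sigma_finite.PiM_eqI)
  let ?F = "\<lambda>i. distr (PiM {..<\<kappa> i} (\<lambda>_. D i)) (PiM UNIV (\<lambda>_. S)) (padn z (\<kappa> i))"
  have pF: "prob_space (?F i)" for i
    using P SS z by (intro prob_space.prob_space_distr prob_space_PiM_UNIV measurable_padn') auto
  show "product_sigma_finite ?F"
    using pF by (simp add: product_sigma_finite_def prob_space_imp_sigma_finite)
  show "finite {..<d}" by simp
  show "sets (distr (PiM {..<d} (\<lambda>i. PiM UNIV (\<lambda>_. D i))) (PiM {..<d} (\<lambda>i. PiM UNIV (\<lambda>_. S))) (hmap z d \<kappa>)) = sets (PiM {..<d} ?F)"
    by (simp cong: sets_PiM_cong)
  fix A assume A: "\<And>i. i \<in> {..<d} \<Longrightarrow> A i \<in> sets (?F i)"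
  interpret B: product_sigma_finite "\<lambda>i. PiM UNIV (\<lambda>_. D i)"
    using P by (simp add: product_sigma_finite_def prob_space_imp_sigma_finite prob_space_PiM_UNIV)
  have mp: "padn z (\<kappa> i) \<in> measurable (PiM UNIV (\<lambda>_. D i)) (PiM UNIV (\<lambda>_. S))" for i
    using SS z by (intro measurable_padn') auto
  have "hmap z d \<kappa> -` PiE {..<d} A \<inter> space (PiM {..<d} (\<lambda>i. PiM UNIV (\<lambda>_. D i)))
      = PiE {..<d} (\<lambda>i. padn z (\<kappa> i) -` A i \<inter> space (PiM UNIV (\<lambda>_. D i)))"
    by (auto simp: hmap_def space_PiM PiE_def Pi_def extensional_def)
  then have "emeasure (distr (PiM {..<d} (\<lambda>i. PiM UNIV (\<lambda>_. D i))) (PiM {..<d} (\<lambda>i. PiM UNIV (\<lambda>_. S))) (hmap z d \<kappa>)) (PiE {..<d} A)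
     = emeasure (PiM {..<d} (\<lambda>i. PiM UNIV (\<lambda>_. D i))) (PiE {..<d} (\<lambda>i. padn z (\<kappa> i) -` A i \<inter> space (PiM UNIV (\<lambda>_. D i))))"
    using A SS z by (subst emeasure_distr) (auto intro!: measurable_hmap sets_PiM_I_finite)
  also have "\<dots> = (\<Prod>i<d. emeasure (PiM UNIV (\<lambda>_. D i)) (padn z (\<kappa> i) -` A i \<inter> space (PiM UNIV (\<lambda>_. D i))))"
    using A mp by (subst B.emeasure_PiM) (auto intro!: measurable_sets)
  also have "\<dots> = (\<Prod>i<d. emeasure (?F i) (A i))"
  proof (intro prod.cong refl)
    fix i assume i: "i \<in> {..<d}"
    have "emeasure (PiM UNIV (\<lambda>_. D i)) (padn z (\<kappa> i) -` A i \<inter> space (PiM UNIV (\<lambda>_. D i)))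
       = emeasure (distr (PiM UNIV (\<lambda>_. D i)) (PiM UNIV (\<lambda>_. S)) (padn z (\<kappa> i))) (A i)"
      using A[OF i] mp by (subst emeasure_distr) auto
    also have "\<dots> = emeasure (?F i) (A i)"
      using P SS z by (subst distr_pad_UNIV) auto
    finally show "emeasure (PiM UNIV (\<lambda>_. D i)) (padn z (\<kappa> i) -` A i \<inter> space (PiM UNIV (\<lambda>_. D i))) = emeasure (?F i) (A i)" .
  qed
  finally show "emeasure (distr (PiM {..<d} (\<lambda>i. PiM UNIV (\<lambda>_. D i))) (PiM {..<d} (\<lambda>i. PiM UNIV (\<lambda>_. S))) (hmap z d \<kappa>)) (PiE {..<d} A) = (\<Prod>i\<in>{..<d}. emeasure (?F i) (A i))"
    by simp
qed

abbreviation KK :: "nat \<Rightarrow> (nat \<Rightarrow> nat) set" where "KK d \<equiv> PiE {..<d} (\<lambda>_. UNIV)"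

lemma countable_KK: "countable (KK d)"
  by (intro countable_PiE) auto

lemma PiM_count_eq: "PiM {..<d} (\<lambda>i. count_space (UNIV::nat set)) = count_space (KK d)"
  by (rule count_space_PiM_finite) auto

lemma sets_Apo: "sets (PiM {..<d} (\<lambda>i. measure_pmf (poisson_pmf lam))) = sets (count_space (KK d))"
proof -
  have "sets (PiM {..<d} (\<lambda>i. measure_pmf (poisson_pmf lam))) = sets (PiM {..<d} (\<lambda>i. count_space (UNIV::nat set)))"
    by (intro sets_PiM_cong) auto
  then show ?thesis by (simp add: PiM_count_eq)
qed

lemma poi_obs_alt: "poi_obs lam d S D z =
   distr ((PiM {..<d} (\<lambda>i. measure_pmf (poisson_pmf lam))) \<Otimes>\<^sub>M (PiM {..<d} (\<lambda>i. PiM UNIV (\<lambda>_. D i))))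
     (count_space (KK d) \<Otimes>\<^sub>M PiM {..<d} (\<lambda>i. PiM UNIV (\<lambda>_. S))) (\<lambda>(\<kappa>, X). (\<kappa>, hmap z d \<kappa> X))"
  unfolding poi_obs_def PiM_count_eq
  by (simp add: hmap_def padn_def)

lemma measurable_pair_countKK:
  assumes "sets M = sets (count_space (KK d))"
  assumes "\<And>x. x \<in> KK d \<Longrightarrow> (\<lambda>y. f (x, y)) \<in> measurable N K"
  shows "f \<in> measurable (M \<Otimes>\<^sub>M N) K"
proof -
  have "f \<in> measurable (count_space (KK d) \<Otimes>\<^sub>M N) K"
    using assms(2) by (intro measurable_pair_measure_countable1 countable_KK) auto
  moreover have "sets (M \<Otimes>\<^sub>M N) = sets (count_space (KK d) \<Otimes>\<^sub>M N)"
    using assms(1) by (intro sets_pair_measure_cong) auto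
  ultimately show ?thesis by (simp cong: measurable_cong_sets)
qed

lemma measurable_fmap:
  assumes SS: "\<And>i. sets (D i) = sets S" and z: "z \<in> space S"
  shows "(\<lambda>(\<kappa>, X). (\<kappa>, hmap z d \<kappa> X)) \<in> measurable ((PiM {..<d} (\<lambda>i. measure_pmf (poisson_pmf lam))) \<Otimes>\<^sub>M (PiM {..<d} (\<lambda>i. PiM UNIV (\<lambda>_. D i))))
     (count_space (KK d) \<Otimes>\<^sub>M PiM {..<d} (\<lambda>i. PiM UNIV (\<lambda>_. S)))"
  by (rule measurable_pair_countKK[OF sets_Apo]) (use SS z in \<open>auto intro!: measurable_Pair measurable_hmap\<close>)

lemma INT_poi:
  assumes P: "\<And>i. prob_space (D i)" and SS: "\<And>i. sets (D i) = sets S" and z: "z \<in> space S"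
  and g: "g \<in> borel_measurable (count_space (KK d) \<Otimes>\<^sub>M PiM {..<d} (\<lambda>i. PiM UNIV (\<lambda>_. S)))"
  shows "(\<integral>\<^sup>+ x. g x \<partial>poi_obs lam d S D z) =
     (\<integral>\<^sup>+ \<kappa>. (\<integral>\<^sup>+ y. g (\<kappa>, y) \<partial>Cm d S D z \<kappa>) \<partial>(PiM {..<d} (\<lambda>i. measure_pmf (poisson_pmf lam))))"
proof -
  let ?A = "PiM {..<d} (\<lambda>i. measure_pmf (poisson_pmf lam))"
  let ?B = "PiM {..<d} (\<lambda>i. PiM UNIV (\<lambda>_. D i))"
  let ?Y = "PiM {..<d} (\<lambda>i. PiM UNIV (\<lambda>_. S))"
  interpret B: prob_space ?B using P by (intro prob_space_PiM prob_space_PiM_UNIV) auto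
  have "(\<integral>\<^sup>+ x. g x \<partial>poi_obs lam d S D z) = (\<integral>\<^sup>+ x. g ((\<lambda>(\<kappa>, X). (\<kappa>, hmap z d \<kappa> X)) x) \<partial>(?A \<Otimes>\<^sub>M ?B))"
    unfolding poi_obs_alt using measurable_fmap[of D S z d lam, OF SS z] g by (intro nn_integral_distr) auto
  also have "\<dots> = (\<integral>\<^sup>+ \<kappa>. (\<integral>\<^sup>+ X. g (\<kappa>, hmap z d \<kappa> X) \<partial>?B) \<partial>?A)"
  proof (rule B.nn_integral_fst[symmetric, where f="\<lambda>x. g ((\<lambda>(\<kappa>, X). (\<kappa>, hmap z d \<kappa> X)) x)", simplified])
    show "(\<lambda>x. g (case x of (\<kappa>, X) \<Rightarrow> (\<kappa>, hmap z d \<kappa> X))) \<in> borel_measurable (?A \<Otimes>\<^sub>M ?B)"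
      using measurable_fmap[OF SS z] g by (rule measurable_compose)
  qed
  also have "\<dots> = (\<integral>\<^sup>+ \<kappa>. (\<integral>\<^sup>+ y. g (\<kappa>, y) \<partial>Cm d S D z \<kappa>) \<partial>?A)"
  proof (intro nn_integral_cong)
    fix \<kappa> assume k: "\<kappa> \<in> space ?A"
    then have k': "\<kappa> \<in> KK d" using sets_eq_imp_space_eq[OF sets_Apo] by simp
    have "(\<integral>\<^sup>+ X. g (\<kappa>, hmap z d \<kappa> X) \<partial>?B) = (\<integral>\<^sup>+ y. g (\<kappa>, y) \<partial>distr ?B ?Y (hmap z d \<kappa>))"
      using SS z g k' by (subst nn_integral_distr) (auto intro!: measurable_hmap measurable_Pair1')
    then show "(\<integral>\<^sup>+ X. g (\<kappa>, hmap z d \<kappa> X) \<partial>?B) = (\<integral>\<^sup>+ y. g (\<kappa>, y) \<partial>Cm d S D z \<kappa>)"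
      using C_eq[OF P SS z] by simp
  qed
  finally show ?thesis .
qed

lemma PiM_density:
  assumes I: "finite I" and P: "\<And>i. prob_space (M i)" and f[measurable]: "\<And>i. f i \<in> borel_measurable (M i)"
    and PD: "\<And>i. prob_space (density (M i) (f i))"
  shows "PiM I (\<lambda>i. density (M i) (f i)) = density (PiM I M) (\<lambda>x. \<Prod>i\<in>I. f i (x i))"
proof (rule product_sigma_finite.PiM_eqI[symmetric])
  interpret M: product_sigma_finite M using P by (simp add: product_sigma_finite_def prob_space_imp_sigma_finite)
  show "product_sigma_finite (\<lambda>i. density (M i) (f i))"
    using PD by (simp add: product_sigma_finite_def prob_space_imp_sigma_finite)
  show "finite I" by fact
  show "sets (density (PiM I M) (\<lambda>x. \<Prod>i\<in>I. f i (x i))) = sets (PiM I (\<lambda>i. density (M i) (f i)))"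
    by (simp cong: sets_PiM_cong)
  fix A assume A: "\<And>i. i \<in> I \<Longrightarrow> A i \<in> sets (density (M i) (f i))"
  then have A': "\<And>i. i \<in> I \<Longrightarrow> A i \<in> sets (M i)" by simp
  have F: "(\<lambda>x. \<Prod>i\<in>I. f i (x i)) \<in> borel_measurable (PiM I M)"
    using I by (intro borel_measurable_prod_ennreal) measurable
  have "emeasure (density (PiM I M) (\<lambda>x. \<Prod>i\<in>I. f i (x i))) (PiE I A)
      = (\<integral>\<^sup>+ x. (\<Prod>i\<in>I. f i (x i)) * indicator (PiE I A) x \<partial>PiM I M)"
    using F A' I by (subst emeasure_density) (auto intro!: sets_PiM_I_finite)
  also have "\<dots> = (\<integral>\<^sup>+ x. (\<Prod>i\<in>I. f i (x i) * indicator (A i) (x i)) \<partial>PiM I M)"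
  proof (intro nn_integral_cong)
    fix x assume "x \<in> space (PiM I M)"
    then have "x \<in> extensional I" by (auto simp: space_PiM PiE_def)
    then have "indicator (PiE I A) x = (\<Prod>i\<in>I. indicator (A i) (x i) :: ennreal)"
      using I by (auto simp: indicator_def PiE_def Pi_def prod.neutral)
    then show "(\<Prod>i\<in>I. f i (x i)) * indicator (PiE I A) x = (\<Prod>i\<in>I. f i (x i) * indicator (A i) (x i))"
      by (simp add: prod.distrib)
  qed
  also have "\<dots> = (\<Prod>i\<in>I. \<integral>\<^sup>+ y. f i y * indicator (A i) y \<partial>M i)"
    using A' I by (subst M.product_nn_integral_prod) auto
  also have "\<dots> = (\<Prod>i\<in>I. emeasure (density (M i) (f i)) (A i))"
    using A' by (intro prod.cong refl) (simp add: emeasure_density)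
  finally show "emeasure (density (PiM I M) (\<lambda>x. \<Prod>i\<in>I. f i (x i))) (PiE I A) = (\<Prod>i\<in>I. emeasure (density (M i) (f i)) (A i))" .
qed

definition Gk :: "nat \<Rightarrow> (nat \<Rightarrow> 'b \<Rightarrow> ennreal) \<Rightarrow> (nat \<Rightarrow> nat) \<times> (nat \<Rightarrow> nat \<Rightarrow> 'b) \<Rightarrow> ennreal" where
  "Gk d L x = (\<Prod>i<d. \<Prod>j<fst x i. L i (snd x i j))"

lemma Cm_density:
  assumes P: "\<And>i. prob_space (D i)" and SS: "\<And>i. sets (D i) = sets S" and z: "z \<in> space S"
    and L[measurable]: "\<And>i. L i \<in> borel_measurable S"
    and PD: "\<And>i. prob_space (density (D i) (L i))"
  shows "Cm d S (\<lambda>i. density (D i) (L i)) z \<kappa> = density (Cm d S D z \<kappa>) (\<lambda>y. Gk d L (\<kappa>, y))"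
proof -
  let ?Z = "PiM UNIV (\<lambda>_. S)"
  have L'[measurable]: "L i \<in> borel_measurable (D i)" for i using L SS by (simp cong: measurable_cong_sets)
  define E where "E i = distr (PiM {..<\<kappa> i} (\<lambda>_. D i)) ?Z (padn z (\<kappa> i))" for i
  have mp: "padn z (\<kappa> i) \<in> measurable (PiM {..<\<kappa> i} (\<lambda>_. D i)) ?Z" for i
    using SS z by (intro measurable_padn') auto
  have PE: "prob_space (E i)" for i
    unfolding E_def using P mp by (intro prob_space.prob_space_distr prob_space_PiM_UNIV) auto
  have gm: "(\<lambda>y. \<Prod>j<n. L i (y j)) \<in> borel_measurable ?Z" for i n
    by measurable
  have fac: "distr (PiM {..<\<kappa> i} (\<lambda>_. density (D i) (L i))) ?Z (padn z (\<kappa> i))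
       = density (E i) (\<lambda>y. \<Prod>j<\<kappa> i. L i (y j))" for i
  proof -
    have eqA: "PiM {..<\<kappa> i} (\<lambda>_. density (D i) (L i)) = density (PiM {..<\<kappa> i} (\<lambda>_. D i)) (\<lambda>x. \<Prod>j<\<kappa> i. L i (x j))"
      using P PD by (intro PiM_density) auto
    have eqB: "(\<lambda>x. \<Prod>j<\<kappa> i. L i (padn z (\<kappa> i) x j)) = (\<lambda>x. \<Prod>j<\<kappa> i. L i (x j))"
      by (auto simp: padn_def fun_eq_iff intro!: prod.cong)
    show ?thesis
      unfolding eqA E_def density_distr[OF gm mp] eqB by (rule refl)
  qed
  have PED: "prob_space (density (E i) (\<lambda>y. \<Prod>j<\<kappa> i. L i (y j)))" for i
  proof -
    have "sets (density (D i) (L i)) = sets S" using SS by simp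
    then show ?thesis
      unfolding fac[symmetric] using PD
      by (intro prob_space.prob_space_distr prob_space_PiM_UNIV measurable_padn') (auto simp: z)
  qed
  have "Cm d S (\<lambda>i. density (D i) (L i)) z \<kappa> = PiM {..<d} (\<lambda>i. density (E i) (\<lambda>y. \<Prod>j<\<kappa> i. L i (y j)))"
    unfolding Cm_def by (intro PiM_cong refl) (simp add: fac)
  also have "\<dots> = density (PiM {..<d} E) (\<lambda>x. \<Prod>i<d. \<Prod>j<\<kappa> i. L i (x i j))"
  proof (rule PiM_density)
    show "(\<lambda>y. \<Prod>j<\<kappa> i. L i (y j)) \<in> borel_measurable (E i)" for i
      using gm unfolding E_def by simp
  qed (use PE PED in auto)
  also have "PiM {..<d} E = Cm d S D z \<kappa>" unfolding Cm_def E_def ..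
  finally show ?thesis by (simp add: Gk_def)
qed

lemma measurable_comp2:
  assumes "i \<in> I" shows "(\<lambda>x. x i j) \<in> measurable (PiM I (\<lambda>i. PiM UNIV (\<lambda>_. S))) S"
proof -
  have "(\<lambda>x. x i) \<in> measurable (PiM I (\<lambda>i. PiM UNIV (\<lambda>_. S))) (PiM UNIV (\<lambda>_. S))"
    using assms by (rule measurable_component_singleton)
  moreover have "(\<lambda>y. y j) \<in> measurable (PiM UNIV (\<lambda>_. S)) S" by (rule measurable_component_singleton) simp
  ultimately show ?thesis by (rule measurable_compose)
qed

lemma Gk_measurable[measurable]:
  assumes L[measurable]: "\<And>i. L i \<in> borel_measurable S"
  shows "Gk d L \<in> borel_measurable (count_space (KK d) \<Otimes>\<^sub>M PiM {..<d} (\<lambda>i. PiM UNIV (\<lambda>_. S)))"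
proof (rule measurable_pair_measure_countable1[OF countable_KK])
  fix x show "(\<lambda>y. Gk d L (x, y)) \<in> borel_measurable (PiM {..<d} (\<lambda>i. PiM UNIV (\<lambda>_. S)))"
    unfolding Gk_def prod.sel
    apply measurable
    by (rule measurable_comp2) auto
qed

lemma sets_poi_obs: "sets (poi_obs lam d S D z) = sets (count_space (KK d) \<Otimes>\<^sub>M PiM {..<d} (\<lambda>i. PiM UNIV (\<lambda>_. S)))"
  unfolding poi_obs_alt by simp

lemma prob_space_poi_obs:
  assumes P: "\<And>i. prob_space (D i)" and SS: "\<And>i. sets (D i) = sets S" and z: "z \<in> space S"
  shows "prob_space (poi_obs lam d S D z)"
  unfolding poi_obs_alt
proof (rule prob_space.prob_space_distr[OF _ measurable_fmap[OF SS z]])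
  show "prob_space (PiM {..<d} (\<lambda>i. measure_pmf (poisson_pmf lam)) \<Otimes>\<^sub>M PiM {..<d} (\<lambda>i. PiM UNIV (\<lambda>_. D i)))"
    using P by (intro prob_space_pair prob_space_PiM prob_space_PiM_UNIV) (auto intro: prob_space_measure_pmf)
qed

lemma poi_density:
  assumes P: "\<And>i. prob_space (D i)" and SS: "\<And>i. sets (D i) = sets S" and z: "z \<in> space S"
    and L[measurable]: "\<And>i. L i \<in> borel_measurable S"
    and PD: "\<And>i. prob_space (density (D i) (L i))"
  shows "poi_obs lam d S (\<lambda>i. density (D i) (L i)) z = density (poi_obs lam d S D z) (Gk d L)"
proof (rule measure_eqI)
  let ?T = "count_space (KK d) \<Otimes>\<^sub>M PiM {..<d} (\<lambda>i. PiM UNIV (\<lambda>_. S))"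
  let ?A = "PiM {..<d} (\<lambda>i. measure_pmf (poisson_pmf lam))"
  show "sets (poi_obs lam d S (\<lambda>i. density (D i) (L i)) z) = sets (density (poi_obs lam d S D z) (Gk d L))"
    by (simp add: sets_poi_obs)
  fix X assume "X \<in> sets (poi_obs lam d S (\<lambda>i. density (D i) (L i)) z)"
  then have X[measurable]: "X \<in> sets ?T" by (simp add: sets_poi_obs)
  have SS': "sets (density (D i) (L i)) = sets S" for i using SS by simp
  have "emeasure (poi_obs lam d S (\<lambda>i. density (D i) (L i)) z) X = (\<integral>\<^sup>+ x. indicator X x \<partial>poi_obs lam d S (\<lambda>i. density (D i) (L i)) z)"
    using X by (simp add: sets_poi_obs)
  also have "\<dots> = (\<integral>\<^sup>+ \<kappa>. (\<integral>\<^sup>+ y. indicator X (\<kappa>, y) \<partial>Cm d S (\<lambda>i. density (D i) (L i)) z \<kappa>) \<partial>?A)"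
    by (rule INT_poi[OF PD SS' z]) measurable
  also have "\<dots> = (\<integral>\<^sup>+ \<kappa>. (\<integral>\<^sup>+ y. Gk d L (\<kappa>, y) * indicator X (\<kappa>, y) \<partial>Cm d S D z \<kappa>) \<partial>?A)"
  proof (intro nn_integral_cong)
    fix \<kappa> assume k: "\<kappa> \<in> space ?A"
    then have k': "\<kappa> \<in> KK d" using sets_eq_imp_space_eq[OF sets_Apo] by simp
    have sC: "sets (Cm d S D z \<kappa>) = sets (PiM {..<d} (\<lambda>i. PiM UNIV (\<lambda>_. S)))"
      unfolding Cm_def by (simp cong: sets_PiM_cong)
    have m1: "(\<lambda>y. Gk d L (\<kappa>, y)) \<in> borel_measurable (Cm d S D z \<kappa>)"
      using k' by (simp add: measurable_cong_sets[OF sC refl] measurable_Pair2')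
    have m2: "(\<lambda>y. indicator X (\<kappa>, y) :: ennreal) \<in> borel_measurable (Cm d S D z \<kappa>)"
      using k' by (simp add: measurable_cong_sets[OF sC refl] measurable_Pair2')
    show "(\<integral>\<^sup>+ y. indicator X (\<kappa>, y) \<partial>Cm d S (\<lambda>i. density (D i) (L i)) z \<kappa>) = (\<integral>\<^sup>+ y. Gk d L (\<kappa>, y) * indicator X (\<kappa>, y) \<partial>Cm d S D z \<kappa>)"
      unfolding Cm_density[OF P SS z L PD] using m1 m2 by (simp add: nn_integral_density)
  qed
  also have "\<dots> = (\<integral>\<^sup>+ x. Gk d L x * indicator X x \<partial>poi_obs lam d S D z)"
    by (rule INT_poi[OF P SS z, symmetric]) measurable
  also have "\<dots> = emeasure (density (poi_obs lam d S D z) (Gk d L)) X"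
    using X by (subst emeasure_density) (auto simp: sets_poi_obs measurable_cong_sets[OF sets_poi_obs refl])
  finally show "emeasure (poi_obs lam d S (\<lambda>i. density (D i) (L i)) z) X = emeasure (density (poi_obs lam d S D z) (Gk d L)) X" .
qed

lemma poisson_mgf:
  assumes lam: "0 < lam" and r: "0 \<le> r"
  shows "(\<integral>\<^sup>+ n. ennreal r ^ n \<partial>measure_pmf (poisson_pmf lam)) = ennreal (exp (lam * (r - 1)))"
proof -
  have "(\<integral>\<^sup>+ n. ennreal r ^ n \<partial>measure_pmf (poisson_pmf lam)) = (\<Sum>n. ennreal (exp (-lam) * ((lam * r) ^ n / fact n)))"
    using lam r unfolding nn_integral_measure_pmf nn_integral_count_space_nat
  proof (intro suminf_cong)
    fix n
    have "ennreal (pmf (poisson_pmf lam) n) * ennreal r ^ n = ennreal (pmf (poisson_pmf lam) n * r ^ n)"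
      using r by (simp add: ennreal_power ennreal_mult)
    also have "pmf (poisson_pmf lam) n * r ^ n = exp (-lam) * ((lam * r) ^ n / fact n)"
      using lam by (simp add: power_mult_distrib field_simps)
    finally show "ennreal (pmf (poisson_pmf lam) n) * ennreal r ^ n = ennreal (exp (-lam) * ((lam * r) ^ n / fact n))" .
  qed
  also have "\<dots> = ennreal (exp (-lam) * exp (lam * r))"
  proof (rule suminf_ennreal_eq)
    show "0 \<le> exp (-lam) * ((lam * r) ^ n / fact n)" for n using lam r by simp
    show "(\<lambda>n. exp (-lam) * ((lam * r) ^ n / fact n)) sums (exp (-lam) * exp (lam * r))"
      by (intro sums_mult) (use exp_converges[of "lam * r"] in \<open>simp add: divide_inverse_commute\<close>)
  qed
  also have "exp (-lam) * exp (lam * r) = exp (lam * (r - 1))"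
    by (simp add: exp_add[symmetric] algebra_simps)
  finally show ?thesis .
qed

lemma Cm_integral:
  assumes P: "\<And>i. prob_space (D i)" and SS: "\<And>i. sets (D i) = sets S" and z: "z \<in> space S"
    and LL[measurable]: "\<And>i. LL i \<in> borel_measurable S"
  shows "(\<integral>\<^sup>+ y. (\<Prod>i<d. \<Prod>j<\<kappa> i. LL i (y i j)) \<partial>Cm d S D z \<kappa>) = (\<Prod>i<d. (\<integral>\<^sup>+ w. LL i w \<partial>D i) ^ \<kappa> i)"
proof -
  let ?Z = "PiM UNIV (\<lambda>_. S)"
  have LL'[measurable]: "LL i \<in> borel_measurable (D i)" for i using LL SS by (simp cong: measurable_cong_sets)
  define E where "E i = distr (PiM {..<\<kappa> i} (\<lambda>_. D i)) ?Z (padn z (\<kappa> i))" for i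
  have mp: "padn z (\<kappa> i) \<in> measurable (PiM {..<\<kappa> i} (\<lambda>_. D i)) ?Z" for i
    using SS z by (intro measurable_padn') auto
  have PE: "prob_space (E i)" for i
    unfolding E_def using P mp by (intro prob_space.prob_space_distr prob_space_PiM_UNIV) auto
  interpret E: product_sigma_finite E using PE by (simp add: product_sigma_finite_def prob_space_imp_sigma_finite)
  have gm: "(\<lambda>y. \<Prod>j<n. LL i (y j)) \<in> borel_measurable ?Z" for i n
    by measurable
  have "(\<integral>\<^sup>+ y. (\<Prod>i<d. \<Prod>j<\<kappa> i. LL i (y i j)) \<partial>Cm d S D z \<kappa>) = (\<Prod>i<d. \<integral>\<^sup>+ w. (\<Prod>j<\<kappa> i. LL i (w j)) \<partial>E i)"
    unfolding Cm_def E_def[symmetric]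
    by (rule E.product_nn_integral_prod[where f="\<lambda>i w. \<Prod>j<\<kappa> i. LL i (w j)"]) (auto simp: E_def gm)
  also have "\<dots> = (\<Prod>i<d. (\<integral>\<^sup>+ w. LL i w \<partial>D i) ^ \<kappa> i)"
  proof (intro prod.cong refl)
    fix i
    interpret Di: product_sigma_finite "\<lambda>_. D i" using P by (simp add: product_sigma_finite_def prob_space_imp_sigma_finite)
    have "(\<integral>\<^sup>+ w. (\<Prod>j<\<kappa> i. LL i (w j)) \<partial>E i) = (\<integral>\<^sup>+ x. (\<Prod>j<\<kappa> i. LL i (padn z (\<kappa> i) x j)) \<partial>PiM {..<\<kappa> i} (\<lambda>_. D i))"
      unfolding E_def using mp gm by (intro nn_integral_distr) auto
    also have "\<dots> = (\<integral>\<^sup>+ x. (\<Prod>j\<in>{..<\<kappa> i}. LL i (x j)) \<partial>PiM {..<\<kappa> i} (\<lambda>_. D i))"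
      by (intro nn_integral_cong prod.cong refl) (auto simp: padn_def)
    also have "\<dots> = (\<Prod>j\<in>{..<\<kappa> i}. \<integral>\<^sup>+ w. LL i w \<partial>D i)"
      by (rule Di.product_nn_integral_prod) auto
    finally show "(\<integral>\<^sup>+ w. (\<Prod>j<\<kappa> i. LL i (w j)) \<partial>E i) = (\<integral>\<^sup>+ w. LL i w \<partial>D i) ^ \<kappa> i" by simp
  qed
  finally show ?thesis .
qed

lemma poi_second:
  assumes lam: "0 < lam" and P: "\<And>i. prob_space (D i)" and SS: "\<And>i. sets (D i) = sets S" and z: "z \<in> space S"
    and L[measurable]: "\<And>i. L i \<in> borel_measurable S" and L'[measurable]: "\<And>i. L' i \<in> borel_measurable S"
    and rho: "\<And>i. (\<integral>\<^sup>+ y. L i y * L' i y \<partial>D i) = ennreal (r i)" and r: "\<And>i. 0 \<le> r i"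
  shows "(\<integral>\<^sup>+ x. Gk d L x * Gk d L' x \<partial>poi_obs lam d S D z) = ennreal (\<Prod>i<d. exp (lam * (r i - 1)))"
proof -
  let ?A = "PiM {..<d} (\<lambda>i. measure_pmf (poisson_pmf lam))"
  interpret A: product_sigma_finite "\<lambda>i. measure_pmf (poisson_pmf lam)"
    by (simp add: product_sigma_finite_def prob_space_imp_sigma_finite prob_space_measure_pmf)
  have "(\<integral>\<^sup>+ x. Gk d L x * Gk d L' x \<partial>poi_obs lam d S D z) = (\<integral>\<^sup>+ \<kappa>. (\<integral>\<^sup>+ y. Gk d L (\<kappa>, y) * Gk d L' (\<kappa>, y) \<partial>Cm d S D z \<kappa>) \<partial>?A)"
    by (rule INT_poi[OF P SS z]) measurable
  also have "\<dots> = (\<integral>\<^sup>+ \<kappa>. (\<Prod>i<d. (\<lambda>n. ennreal (r i) ^ n) (\<kappa> i)) \<partial>?A)"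
  proof (intro nn_integral_cong)
    fix \<kappa>
    have "(\<integral>\<^sup>+ y. Gk d L (\<kappa>, y) * Gk d L' (\<kappa>, y) \<partial>Cm d S D z \<kappa>) = (\<integral>\<^sup>+ y. (\<Prod>i<d. \<Prod>j<\<kappa> i. (\<lambda>i w. L i w * L' i w) i (y i j)) \<partial>Cm d S D z \<kappa>)"
      by (simp add: Gk_def prod.distrib)
    also have "\<dots> = (\<Prod>i<d. (\<integral>\<^sup>+ w. L i w * L' i w \<partial>D i) ^ \<kappa> i)"
      by (rule Cm_integral[OF P SS z]) measurable
    finally show "(\<integral>\<^sup>+ y. Gk d L (\<kappa>, y) * Gk d L' (\<kappa>, y) \<partial>Cm d S D z \<kappa>) = (\<Prod>i<d. (\<lambda>n. ennreal (r i) ^ n) (\<kappa> i))"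
      by (simp add: rho)
  qed
  also have "\<dots> = (\<Prod>i<d. \<integral>\<^sup>+ n. ennreal (r i) ^ n \<partial>measure_pmf (poisson_pmf lam))"
    by (rule A.product_nn_integral_prod) auto
  also have "\<dots> = (\<Prod>i<d. ennreal (exp (lam * (r i - 1))))"
    using lam r by (simp add: poisson_mgf)
  also have "\<dots> = ennreal (\<Prod>i<d. exp (lam * (r i - 1)))"
    by (simp add: prod_ennreal)
  finally show ?thesis .
qed

lemma chi_square_density:
  assumes Q: "prob_space Q" and F[measurable]: "F \<in> borel_measurable Q"
  shows "chi_square (density Q F) Q = (\<integral>\<^sup>+ x. (F x)^2 \<partial>Q) - 1"
proof -
  interpret Q: prob_space Q by fact
  have "AE x in Q. F x = RN_deriv Q (density Q F) x"
    by (rule Q.RN_deriv_unique[OF F refl])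
  then have "(\<integral>\<^sup>+ x. (RN_deriv Q (density Q F) x)^2 \<partial>Q) = (\<integral>\<^sup>+ x. (F x)^2 \<partial>Q)"
    by (intro nn_integral_cong_AE) auto
  then show ?thesis
    unfolding chi_square_def using absolutely_continuousI_density[OF F] by simp
qed

lemma mixture_density:
  assumes K: "finite K" "K \<noteq> {}"
    and N: "\<And>k. prob_space (N k)" "\<And>k. sets (N k) = sets Q"
    and NF: "\<And>k. k \<in> K \<Longrightarrow> N k = density Q (F k)"
    and F[measurable]: "\<And>k. F k \<in> borel_measurable Q"
  shows "mixture (pmf_of_set K) N = density Q (\<lambda>x. (\<Sum>k\<in>K. F k x) / of_nat (card K))"
proof (rule measure_eqI)
  have Nm: "N \<in> measurable (measure_pmf (pmf_of_set K)) (subprob_algebra Q)"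
    using N by (auto simp: space_subprob_algebra prob_space_imp_subprob_space)
  show "sets (mixture (pmf_of_set K) N) = sets (density Q (\<lambda>x. (\<Sum>k\<in>K. F k x) / of_nat (card K)))"
    unfolding mixture_def using N by (subst sets_bind[where N=Q]) auto
  fix X assume "X \<in> sets (mixture (pmf_of_set K) N)"
  then have X: "X \<in> sets Q" unfolding mixture_def using N by (subst (asm) sets_bind[where N=Q]) auto
  have "emeasure (mixture (pmf_of_set K) N) X = (\<integral>\<^sup>+ k. emeasure (N k) X \<partial>measure_pmf (pmf_of_set K))"
    unfolding mixture_def using X Nm by (intro emeasure_bind) auto
  also have "\<dots> = (\<Sum>k\<in>K. emeasure (N k) X) / of_nat (card K)"
    using K by (simp add: nn_integral_pmf_of_set)
  also have "\<dots> = (\<Sum>k\<in>K. \<integral>\<^sup>+ x. F k x * indicator X x \<partial>Q) / of_nat (card K)"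
    using X by (intro arg_cong2[where f="(/)"] sum.cong refl) (simp add: NF emeasure_density)
  also have "\<dots> = (\<integral>\<^sup>+ x. (\<Sum>k\<in>K. F k x * indicator X x) \<partial>Q) / of_nat (card K)"
    using X by (subst nn_integral_sum) auto
  also have "\<dots> = (\<integral>\<^sup>+ x. (\<Sum>k\<in>K. F k x * indicator X x) / of_nat (card K) \<partial>Q)"
    unfolding divide_ennreal_def using X by (subst nn_integral_multc) auto
  also have "\<dots> = emeasure (density Q (\<lambda>x. (\<Sum>k\<in>K. F k x) / of_nat (card K))) X"
    using X by (subst emeasure_density) (auto simp: sum_distrib_right[symmetric] divide_ennreal_def mult_ac intro!: nn_integral_cong)
  finally show "emeasure (mixture (pmf_of_set K) N) X = emeasure (density Q (\<lambda>x. (\<Sum>k\<in>K. F k x) / of_nat (card K))) X" .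
qed

lemma chi_mix:
  assumes lam: "0 < lam" and K: "finite K" "K \<noteq> {}"
    and P0: "\<And>i. prob_space (D0 i)" and SS: "\<And>i. sets (D0 i) = sets S" and z: "z \<in> space S"
    and L[measurable]: "\<And>k i. L k i \<in> borel_measurable S"
    and PD: "\<And>k i. prob_space (density (D0 i) (L k i))"
    and rho: "\<And>k k' i. (\<integral>\<^sup>+ y. L k i y * L k' i y \<partial>D0 i) = ennreal (R k k' i)"
    and R: "\<And>k k' i. 0 \<le> R k k' i"
  shows "chi_square (mixture (pmf_of_set K) (\<lambda>k. poi_obs lam d S (\<lambda>i. density (D0 i) (L k i)) z)) (poi_obs lam d S D0 z)
     = ennreal ((\<Sum>k\<in>K. \<Sum>k'\<in>K. \<Prod>i<d. exp (lam * (R k k' i - 1))) / (real (card K))^2) - 1"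
proof -
  let ?Q = "poi_obs lam d S D0 z"
  let ?T = "count_space (KK d) \<Otimes>\<^sub>M PiM {..<d} (\<lambda>i. PiM UNIV (\<lambda>_. S))"
  have Fm[measurable]: "Gk d (L k) \<in> borel_measurable ?Q" for k
    by (simp add: measurable_cong_sets[OF sets_poi_obs refl])
  have SS': "sets (density (D0 i) (L k i)) = sets S" for k i using SS by simp
  have mix: "mixture (pmf_of_set K) (\<lambda>k. poi_obs lam d S (\<lambda>i. density (D0 i) (L k i)) z)
      = density ?Q (\<lambda>x. (\<Sum>k\<in>K. Gk d (L k) x) / of_nat (card K))"
  proof (rule mixture_density[OF K])
    show "prob_space (poi_obs lam d S (\<lambda>i. density (D0 i) (L k i)) z)" for k
      by (rule prob_space_poi_obs[OF PD SS' z])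
    show "sets (poi_obs lam d S (\<lambda>i. density (D0 i) (L k i)) z) = sets ?Q" for k
      by (simp add: sets_poi_obs)
    show "poi_obs lam d S (\<lambda>i. density (D0 i) (L k i)) z = density ?Q (Gk d (L k))" for k
      by (rule poi_density[OF P0 SS z L PD])
  qed (rule Fm)
  have Qp: "prob_space ?Q" by (rule prob_space_poi_obs[OF P0 SS z])
  have cpos: "0 < real (card K)" using K by (simp add: card_gt_0_iff)
  have inv: "inverse (of_nat (card K) :: ennreal) = ennreal (1 / real (card K))"
    using cpos by (simp add: ennreal_of_nat_eq_real_of_nat inverse_ennreal divide_inverse)
  have "(\<integral>\<^sup>+ x. ((\<Sum>k\<in>K. Gk d (L k) x) / of_nat (card K))^2 \<partial>?Q)
      = (\<integral>\<^sup>+ x. (\<Sum>k\<in>K. \<Sum>k'\<in>K. Gk d (L k) x * Gk d (L k') x) * ennreal ((1 / real (card K))^2) \<partial>?Q)"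
  proof (intro nn_integral_cong)
    fix x
    have eq: "ennreal (1 / real (card K)) * ennreal (1 / real (card K)) = ennreal ((1 / real (card K))^2)"
      by (simp add: ennreal_mult[symmetric] power2_eq_square)
    show "((\<Sum>k\<in>K. Gk d (L k) x) / of_nat (card K))^2 = (\<Sum>k\<in>K. \<Sum>k'\<in>K. Gk d (L k) x * Gk d (L k') x) * ennreal ((1 / real (card K))^2)"
      unfolding divide_ennreal_def inv eq[symmetric] by (simp add: power2_eq_square sum_product mult_ac)
  qed
  also have "\<dots> = (\<Sum>k\<in>K. \<Sum>k'\<in>K. \<integral>\<^sup>+ x. Gk d (L k) x * Gk d (L k') x \<partial>?Q) * ennreal ((1 / real (card K))^2)"
    by (simp add: nn_integral_multc nn_integral_sum)
  also have "\<dots> = (\<Sum>k\<in>K. \<Sum>k'\<in>K. ennreal (\<Prod>i<d. exp (lam * (R k k' i - 1)))) * ennreal ((1 / real (card K))^2)"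
    by (simp add: poi_second[OF lam P0 SS z L L rho R])
  also have "\<dots> = ennreal ((\<Sum>k\<in>K. \<Sum>k'\<in>K. \<Prod>i<d. exp (lam * (R k k' i - 1))) / (real (card K))^2)"
    by (simp add: sum_ennreal ennreal_mult'[symmetric] prod_nonneg sum_nonneg power_divide field_simps)
  finally have "(\<integral>\<^sup>+ x. ((\<Sum>k\<in>K. Gk d (L k) x) / of_nat (card K))^2 \<partial>?Q) = \<dots>" .
  then show ?thesis
    unfolding mix by (subst chi_square_density[OF Qp]) auto
qed

lemma block_sum:
  fixes g :: "real \<Rightarrow> real"
  assumes g0: "g 0 = 0" and k: "1 \<le> k" "k \<le> m" and k': "1 \<le> k'" "k' \<le> m"
  shows "(\<Sum>i\<in>{..<r*m}. g ((theta r \<delta> k i - 1/2) * (theta r \<delta> k' i - 1/2))) = (if k = k' then real r * g (\<delta>^2) else 0)"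
proof (cases "k = k'")
  case True
  have "(\<Sum>i\<in>{..<r*m}. g ((theta r \<delta> k i - 1/2) * (theta r \<delta> k' i - 1/2))) = (\<Sum>i\<in>{..<r*m}. if (k - 1) * r \<le> i \<and> i < k * r then g (\<delta>^2) else 0)"
    using True g0 by (intro sum.cong refl) (auto simp: theta_def power2_eq_square)
  also have "\<dots> = (\<Sum>i\<in>{i\<in>{..<r*m}. (k - 1) * r \<le> i \<and> i < k * r}. g (\<delta>^2))"
    by (rule sum.inter_filter[symmetric]) simp
  also have "{i\<in>{..<r*m}. (k - 1) * r \<le> i \<and> i < k * r} = {(k - 1) * r..<k * r}"
  proof -
    have "k * r \<le> m * r" using k by simp
    then have kr: "x < k * r \<Longrightarrow> x < r * m" for x by (metis less_le_trans mult.commute)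
    show ?thesis by (auto intro: kr)
  qed
  also have "(\<Sum>i\<in>{(k - 1) * r..<k * r}. g (\<delta>^2)) = real r * g (\<delta>^2)"
    using k by (simp add: diff_mult_distrib)
  finally show ?thesis using True by simp
next
  case False
  have "(theta r \<delta> k i - 1/2) * (theta r \<delta> k' i - 1/2) = 0" for i
  proof (rule ccontr)
    assume "\<not> ?thesis"
    then have a: "(k - 1) * r \<le> i \<and> i < k * r" and b: "(k' - 1) * r \<le> i \<and> i < k' * r"
      by (auto simp: theta_def split: if_splits)
    from a b have "(k - 1) * r < k' * r" "(k' - 1) * r < k * r" by linarith+
    then have "k - 1 < k'" "k' - 1 < k" by (simp_all add: mult_less_cancel2)
    then show False using False k k' by linarith
  qed
  note z0 = this
  have "(\<Sum>i\<in>{..<r*m}. g ((theta r \<delta> k i - 1/2) * (theta r \<delta> k' i - 1/2))) = (\<Sum>i\<in>{..<r*m}. g 0)"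
    by (intro sum.cong refl) (simp only: z0)
  then show ?thesis using False g0 by simp
qed

lemma sum_diag:
  fixes E :: real assumes "finite K"
  shows "(\<Sum>k\<in>K. \<Sum>k'\<in>K. if k = k' then E else 1) = real (card K) * (E - 1) + (real (card K))^2"
proof -
  have "(\<Sum>k\<in>K. \<Sum>k'\<in>K. if k = k' then E else 1) = (\<Sum>k\<in>K. \<Sum>k'\<in>K. 1 + (if k = k' then E - 1 else 0))"
    by (intro sum.cong refl) auto
  also have "\<dots> = (\<Sum>k\<in>K. real (card K) + (E - 1))"
    using assms by (simp add: sum.distrib)
  finally show ?thesis by (simp add: power2_eq_square algebra_simps)
qed

lemma nd_int1: "(\<integral>\<^sup>+ y. ennreal (normal_density \<mu> 1 y) \<partial>lborel) = 1"
proof -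
  interpret prob_space "density lborel (\<lambda>x. ennreal (normal_density \<mu> 1 x))"
    by (rule prob_space_normal_density) simp
  have "emeasure (density lborel (\<lambda>x. ennreal (normal_density \<mu> 1 x))) UNIV = 1"
    using emeasure_space_1 by simp
  then show ?thesis by (simp add: emeasure_density)
qed

lemma nd_prod: "normal_density a 1 y * normal_density b 1 y / normal_density c 1 y
   = exp ((a - c) * (b - c)) * normal_density (a + b - c) 1 y"
proof -
  have e: "exp (- (y - a)\<^sup>2 / 2) * exp (- (y - b)\<^sup>2 / 2) / exp (- (y - c)\<^sup>2 / 2)
      = exp ((a - c) * (b - c)) * exp (- (y - (a + b - c))\<^sup>2 / 2)"
    unfolding exp_add[symmetric] exp_diff[symmetric] by (rule arg_cong[where f=exp]) (simp add: power2_eq_square field_simps)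
  have "normal_density a 1 y * normal_density b 1 y / normal_density c 1 y
      = (1 / sqrt (2 * pi)) * (exp (- (y - a)\<^sup>2 / 2) * exp (- (y - b)\<^sup>2 / 2) / exp (- (y - c)\<^sup>2 / 2))"
    by (simp add: normal_density_def field_simps)
  also have "\<dots> = exp ((a - c) * (b - c)) * normal_density (a + b - c) 1 y"
    unfolding e by (simp add: normal_density_def)
  finally show ?thesis .
qed

definition Lg :: "real \<Rightarrow> real \<Rightarrow> real \<Rightarrow> ennreal" where
  "Lg c a y = ennreal (normal_density a 1 y / normal_density c 1 y)"

lemma Lg_measurable[measurable]: "Lg c a \<in> borel_measurable lborel"
  unfolding Lg_def by measurable

lemma gauss_dens: "density lborel (\<lambda>x. ennreal (normal_density a 1 x)) = density (density lborel (\<lambda>x. ennreal (normal_density c 1 x))) (Lg c a)"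
proof -
  have "density (density lborel (\<lambda>x. ennreal (normal_density c 1 x))) (Lg c a)
     = density lborel (\<lambda>x. ennreal (normal_density c 1 x) * Lg c a x)"
    by (rule density_density_eq) auto
  also have "(\<lambda>x. ennreal (normal_density c 1 x) * Lg c a x) = (\<lambda>x. ennreal (normal_density a 1 x))"
  proof
    fix x
    have "normal_density c 1 x > 0" by (rule normal_density_pos) simp
    then show "ennreal (normal_density c 1 x) * Lg c a x = ennreal (normal_density a 1 x)"
      unfolding Lg_def by (simp add: ennreal_mult[symmetric])
  qed
  finally show ?thesis ..
qed

lemma gauss_rho: "(\<integral>\<^sup>+ y. Lg c a y * Lg c b y \<partial>density lborel (\<lambda>x. ennreal (normal_density c 1 x)))
   = ennreal (exp ((a - c) * (b - c)))"
proof -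
  have "(\<integral>\<^sup>+ y. Lg c a y * Lg c b y \<partial>density lborel (\<lambda>x. ennreal (normal_density c 1 x)))
     = (\<integral>\<^sup>+ y. ennreal (normal_density c 1 y) * (Lg c a y * Lg c b y) \<partial>lborel)"
    by (rule nn_integral_density) auto
  also have "\<dots> = (\<integral>\<^sup>+ y. ennreal (exp ((a - c) * (b - c))) * ennreal (normal_density (a + b - c) 1 y) \<partial>lborel)"
  proof (intro nn_integral_cong)
    fix y
    have p: "normal_density c 1 y > 0" by (rule normal_density_pos) simp
    have "ennreal (normal_density c 1 y) * (Lg c a y * Lg c b y)
       = ennreal (normal_density c 1 y * ((normal_density a 1 y / normal_density c 1 y) * (normal_density b 1 y / normal_density c 1 y)))"
      unfolding Lg_def using p by (simp add: ennreal_mult[symmetric])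
    also have "normal_density c 1 y * ((normal_density a 1 y / normal_density c 1 y) * (normal_density b 1 y / normal_density c 1 y))
      = normal_density a 1 y * normal_density b 1 y / normal_density c 1 y"
      using p by (simp add: field_simps)
    also note nd_prod
    finally show "ennreal (normal_density c 1 y) * (Lg c a y * Lg c b y) = ennreal (exp ((a - c) * (b - c))) * ennreal (normal_density (a + b - c) 1 y)"
      by (simp add: ennreal_mult[symmetric])
  qed
  also have "\<dots> = ennreal (exp ((a - c) * (b - c)))"
    by (simp add: nn_integral_cmult nd_int1)
  finally show ?thesis .
qed

definition Lb :: "real \<Rightarrow> bool \<Rightarrow> ennreal" where
  "Lb a y = ennreal (2 * pmf (bernoulli_pmf a) y)"

lemma Lb_measurable[measurable]: "Lb a \<in> borel_measurable (count_space UNIV)"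
  by simp

lemma bern_dens:
  assumes "0 \<le> a" "a \<le> 1"
  shows "measure_pmf (bernoulli_pmf a) = density (measure_pmf (bernoulli_pmf (1/2))) (Lb a)"
proof -
  have "density (measure_pmf (bernoulli_pmf (1/2))) (Lb a) = density (count_space UNIV) (\<lambda>x. ennreal (pmf (bernoulli_pmf (1/2)) x) * Lb a x)"
    unfolding measure_pmf_eq_density[of "bernoulli_pmf (1/2)"] by (rule density_density_eq) auto
  also have "(\<lambda>x. ennreal (pmf (bernoulli_pmf (1/2)) x) * Lb a x) = (\<lambda>x. ennreal (pmf (bernoulli_pmf a) x))"
  proof
    fix x :: bool
    have "pmf (bernoulli_pmf (1/2)) x = 1/2" by (cases x) auto
    then have "ennreal (pmf (bernoulli_pmf (1/2)) x) * Lb a x = ennreal (1/2) * ennreal (2 * pmf (bernoulli_pmf a) x)"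
      unfolding Lb_def by simp
    also have "\<dots> = ennreal (1/2 * (2 * pmf (bernoulli_pmf a) x))"
      by (rule ennreal_mult[symmetric]) auto
    finally show "ennreal (pmf (bernoulli_pmf (1/2)) x) * Lb a x = ennreal (pmf (bernoulli_pmf a) x)"
      by simp
  qed
  finally show ?thesis by (simp add: measure_pmf_eq_density)
qed

lemma bern_rho:
  assumes "0 \<le> a" "a \<le> 1" "0 \<le> b" "b \<le> 1"
  shows "(\<integral>\<^sup>+ y. Lb a y * Lb b y \<partial>measure_pmf (bernoulli_pmf (1/2))) = ennreal (1 + 4 * ((a - 1/2) * (b - 1/2)))"
proof -
  have "(\<integral>\<^sup>+ y. Lb a y * Lb b y \<partial>measure_pmf (bernoulli_pmf (1/2))) = (\<Sum>y\<in>UNIV. Lb a y * Lb b y * ennreal (pmf (bernoulli_pmf (1/2)) y))"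
    by (subst nn_integral_measure_pmf_finite) auto
  also have "\<dots> = ennreal (2 * a * (2 * b) * (1/2) + 2 * (1 - a) * (2 * (1 - b)) * (1/2))"
  proof -
    have "(\<Sum>y\<in>UNIV. Lb a y * Lb b y * ennreal (pmf (bernoulli_pmf (1/2)) y))
       = Lb a True * Lb b True * ennreal (1/2) + Lb a False * Lb b False * ennreal (1/2)"
      by (simp add: UNIV_bool)
    also have "\<dots> = ennreal (2 * a) * ennreal (2 * b) * ennreal (1/2) + ennreal (2 * (1 - a)) * ennreal (2 * (1 - b)) * ennreal (1/2)"
      using assms by (simp add: Lb_def)
    also have "\<dots> = ennreal (2 * a * (2 * b) * (1/2) + 2 * (1 - a) * (2 * (1 - b)) * (1/2))"
      using assms by (simp only: ennreal_mult ennreal_plus mult_nonneg_nonneg)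
    finally show ?thesis .
  qed
  also have "2 * a * (2 * b) * (1/2) + 2 * (1 - a) * (2 * (1 - b)) * (1/2) = 1 + 4 * ((a - 1/2) * (b - 1/2))"
    by (simp add: algebra_simps)
  finally show ?thesis .
qed

lemma final_sum:
  fixes r s :: nat and lam \<delta> :: real and g :: "real \<Rightarrow> real" and R :: "nat \<Rightarrow> nat \<Rightarrow> nat \<Rightarrow> real"
  assumes s: "s > 0" and dd: "d = r * s" and g0: "g 0 = 0"
    and Rg: "\<And>k k' i. lam * (R k k' i - 1) = g ((theta r \<delta> k i - 1/2) * (theta r \<delta> k' i - 1/2))"
  shows "(\<Sum>k\<in>{1..s}. \<Sum>k'\<in>{1..s}. \<Prod>i<d. exp (lam * (R k k' i - 1))) / (real (card {1..s}))^2
     = 1 + (exp (real r * g (\<delta>^2)) - 1) / real s"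
proof -
  have "(\<Sum>k\<in>{1..s}. \<Sum>k'\<in>{1..s}. \<Prod>i<d. exp (lam * (R k k' i - 1)))
      = (\<Sum>k\<in>{1..s}. \<Sum>k'\<in>{1..s}. if k = k' then exp (real r * g (\<delta>^2)) else 1)"
  proof (intro sum.cong refl)
    fix k k' assume k: "k \<in> {1..s}" and k': "k' \<in> {1..s}"
    have "(\<Prod>i<d. exp (lam * (R k k' i - 1))) = exp (\<Sum>i\<in>{..<d}. g ((theta r \<delta> k i - 1/2) * (theta r \<delta> k' i - 1/2)))"
      by (simp add: exp_sum Rg)
    also have "\<dots> = exp (if k = k' then real r * g (\<delta>^2) else 0)"
      using k k' block_sum[where g=g and k=k and m=s and k'=k' and r=r and \<delta>=\<delta>, OF g0] by (simp add: dd)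
    finally show "(\<Prod>i<d. exp (lam * (R k k' i - 1))) = (if k = k' then exp (real r * g (\<delta>^2)) else 1)"
      by simp
  qed
  also have "\<dots> = real s * (exp (real r * g (\<delta>^2)) - 1) + (real s)^2"
    using sum_diag[of "{1..s}" "exp (real r * g (\<delta>^2))"] by simp
  finally show ?thesis using s by (simp add: field_simps power2_eq_square)
qed

lemma exp_le_quad: "0 \<le> (x::real) \<Longrightarrow> x \<le> 1 \<Longrightarrow> exp x - 1 \<le> x + x^2"
  using exp_bound[of x] by (simp add: power2_eq_square)

lemma theta_range: "0 < \<delta> \<Longrightarrow> \<delta> \<le> 2/5 \<Longrightarrow> 0 \<le> theta r \<delta> k i \<and> theta r \<delta> k i \<le> 1"
  by (auto simp: theta_def)

lemma ennreal_chi_bound: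
  fixes E b :: real assumes "1 \<le> E" "0 < s" "E - 1 \<le> b"
  shows "ennreal (1 + (E - 1) / s) - 1 \<le> ennreal (b / s)"
proof -
  have "ennreal (1 + (E - 1) / s) - 1 = ennreal ((E - 1) / s)"
    using assms by (subst ennreal_1[symmetric], subst ennreal_minus) auto
  also have "\<dots> \<le> ennreal (b / s)"
    using assms by (intro ennreal_leI divide_right_mono) auto
  finally show ?thesis .
qed

theorem lemma9:
  fixes r s :: nat and lam \<delta> :: real
  assumes "r > 0" and "s > 0" and "lam > 0" and "0 < \<delta>" and "\<delta> \<le> 2/5"
  defines "d \<equiv> r * s"
  shows "(lam * \<delta>^2 * r \<le> 2/5 \<longrightarrow>
           chi_square (mixture (pmf_of_set {1..s}) (\<lambda>k. G_law lam d (theta r \<delta> k)))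
                      (G_law lam d theta0)
           \<le> ennreal (2 * lam * \<delta>^2 * r / s)) \<and>
         (lam * \<delta>^2 * r \<le> 1/10 \<longrightarrow>
           chi_square (mixture (pmf_of_set {1..s}) (\<lambda>k. V_law lam d (theta r \<delta> k)))
                      (V_law lam d theta0)
           \<le> ennreal (8 * lam * \<delta>^2 * r / s))"
proof (intro conjI impI)
  have lam: "0 < lam" and s: "0 < s" and dp: "0 < \<delta>" "\<delta> \<le> 2/5" using assms by auto
  have K: "finite {1..s}" "{1..s} \<noteq> {}" using s by auto
  have cardK: "card {1..s} = s" by simp
  let ?a = "lam * \<delta>^2 * real r"
  have a0: "0 \<le> ?a" using lam by simp
  {
    assume A: "?a \<le> 2/5"
    let ?D0 = "\<lambda>i::nat. density lborel (\<lambda>x. ennreal (normal_density (1/2) 1 x))"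
    let ?L = "\<lambda>k i. Lg (1/2) (theta r \<delta> k i)"
    let ?R = "\<lambda>k k' i. exp ((theta r \<delta> k i - 1/2) * (theta r \<delta> k' i - 1/2))"
    have eqk: "G_law lam d (theta r \<delta> k) = poi_obs lam d lborel (\<lambda>i. density (?D0 i) (?L k i)) 0" for k
      unfolding G_law_def by (rule arg_cong[where f="\<lambda>D. poi_obs lam d lborel D 0"]) (rule ext, rule gauss_dens)
    have eq0: "G_law lam d theta0 = poi_obs lam d lborel ?D0 0"
      unfolding G_law_def theta0_def ..
    have ch: "chi_square (mixture (pmf_of_set {1..s}) (\<lambda>k. G_law lam d (theta r \<delta> k))) (G_law lam d theta0)
      = ennreal ((\<Sum>k\<in>{1..s}. \<Sum>k'\<in>{1..s}. \<Prod>i<d. exp (lam * (?R k k' i - 1))) / (real (card {1..s}))^2) - 1"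
      unfolding eqk eq0
    proof (rule chi_mix[OF lam K])
      show "prob_space (?D0 i)" for i by (rule prob_space_normal_density) simp
      show "prob_space (density (?D0 i) (?L k i))" for k i
        unfolding gauss_dens[symmetric] by (rule prob_space_normal_density) simp
      show "(\<integral>\<^sup>+ y. ?L k i y * ?L k' i y \<partial>?D0 i) = ennreal (?R k k' i)" for k k' i
        by (rule gauss_rho)
    qed auto
    define g where "g t = lam * (exp t - 1)" for t
    have fs: "(\<Sum>k\<in>{1..s}. \<Sum>k'\<in>{1..s}. \<Prod>i<d. exp (lam * (?R k k' i - 1))) / (real (card {1..s}))^2
        = 1 + (exp (real r * g (\<delta>^2)) - 1) / real s"
      by (rule final_sum[OF s d_def[THEN meta_eq_to_obj_eq]]) (simp_all add: g_def)
    let ?t = "\<delta>^2"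
    have t0: "0 \<le> ?t" and t1: "?t \<le> 4/25"
    proof -
      show "0 \<le> ?t" by simp
      have "\<delta>^2 \<le> (2/5)^2" using dp by (intro power_mono) auto
      then show "?t \<le> 4/25" by (simp add: power2_eq_square)
    qed
    have h1: "exp ?t - 1 \<le> ?t + ?t^2" using t0 t1 by (intro exp_le_quad) auto
    have "?t * ?t \<le> ?t * (4/25)" using t0 t1 by (intro mult_left_mono) auto
    then have h1': "?t + ?t^2 \<le> ?t * (29/25)" by (simp add: power2_eq_square)
    let ?x = "real r * g ?t"
    have x0: "0 \<le> ?x" using lam by (simp add: g_def)
    have "?x = (lam * real r) * (exp ?t - 1)" by (simp add: g_def)
    also have "\<dots> \<le> (lam * real r) * (?t * (29/25))"
      using lam h1 h1' by (intro mult_left_mono) auto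
    also have "\<dots> = ?a * (29/25)" by simp
    finally have x1: "?x \<le> ?a * (29/25)" .
    have x2: "?x \<le> 58/125" using x1 A by linarith
    have "exp ?x - 1 \<le> ?x + ?x^2" using x0 x2 by (intro exp_le_quad) auto
    also have "\<dots> = ?x * (1 + ?x)" by (simp add: power2_eq_square algebra_simps)
    also have "\<dots> \<le> (?a * (29/25)) * (1 + 58/125)"
      by (rule mult_mono[OF x1]) (use x0 x2 a0 in auto)
    also have "\<dots> \<le> 2 * ?a" using a0 by (simp add: mult_ac)
    finally have bnd: "exp ?x - 1 \<le> 2 * ?a" .
    have "chi_square (mixture (pmf_of_set {1..s}) (\<lambda>k. G_law lam d (theta r \<delta> k))) (G_law lam d theta0)
       \<le> ennreal (2 * ?a / real s)"
      unfolding ch fs using x0 s bnd by (intro ennreal_chi_bound) auto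
    then show "chi_square (mixture (pmf_of_set {1..s}) (\<lambda>k. G_law lam d (theta r \<delta> k))) (G_law lam d theta0)
       \<le> ennreal (2 * lam * \<delta>^2 * r / s)" by (simp add: mult.assoc)
  }
  {
    assume A: "?a \<le> 1/10"
    let ?D0 = "\<lambda>i::nat. measure_pmf (bernoulli_pmf (1/2))"
    let ?L = "\<lambda>k i. Lb (theta r \<delta> k i)"
    let ?R = "\<lambda>k k' i. 1 + 4 * ((theta r \<delta> k i - 1/2) * (theta r \<delta> k' i - 1/2))"
    have eqk: "V_law lam d (theta r \<delta> k) = poi_obs lam d (count_space UNIV) (\<lambda>i. density (?D0 i) (?L k i)) False" for k
      unfolding V_law_def by (rule arg_cong[where f="\<lambda>D. poi_obs lam d (count_space UNIV) D False"]) (rule ext, rule bern_dens, use theta_range[OF dp] in auto)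
    have eq0: "V_law lam d theta0 = poi_obs lam d (count_space UNIV) ?D0 False"
      unfolding V_law_def theta0_def ..
    have ch: "chi_square (mixture (pmf_of_set {1..s}) (\<lambda>k. V_law lam d (theta r \<delta> k))) (V_law lam d theta0)
      = ennreal ((\<Sum>k\<in>{1..s}. \<Sum>k'\<in>{1..s}. \<Prod>i<d. exp (lam * (?R k k' i - 1))) / (real (card {1..s}))^2) - 1"
      unfolding eqk eq0
    proof (rule chi_mix[OF lam K])
      show "prob_space (?D0 i)" for i by (rule prob_space_measure_pmf)
      show "prob_space (density (?D0 i) (?L k i))" for k i
        using theta_range[OF dp] by (simp add: bern_dens[symmetric] prob_space_measure_pmf)
      show "(\<integral>\<^sup>+ y. ?L k i y * ?L k' i y \<partial>?D0 i) = ennreal (?R k k' i)" for k k' i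
        using theta_range[OF dp] by (intro bern_rho) auto
      show "0 \<le> ?R k k' i" for k k' i
        using dp by (auto simp: theta_def)
    qed auto
    define g where "g t = lam * (4 * t)" for t
    have fs: "(\<Sum>k\<in>{1..s}. \<Sum>k'\<in>{1..s}. \<Prod>i<d. exp (lam * (?R k k' i - 1))) / (real (card {1..s}))^2
        = 1 + (exp (real r * g (\<delta>^2)) - 1) / real s"
      by (rule final_sum[OF s d_def[THEN meta_eq_to_obj_eq]]) (simp_all add: g_def)
    let ?x = "real r * g (\<delta>^2)"
    have xa: "?x = 4 * ?a" by (simp add: g_def)
    have x0: "0 \<le> ?x" unfolding xa using a0 by simp
    have x2: "?x \<le> 2/5" unfolding xa using A by (simp add: mult_ac)
    have "exp ?x - 1 \<le> ?x + ?x^2" using x0 x2 by (intro exp_le_quad) auto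
    also have "\<dots> = ?x * (1 + ?x)" by (simp add: power2_eq_square algebra_simps)
    also have "\<dots> \<le> ?x * (1 + 2/5)"
      using x0 x2 by (intro mult_left_mono) auto
    also have "\<dots> \<le> 8 * ?a" unfolding xa using a0 by (simp add: mult_ac)
    finally have bnd: "exp ?x - 1 \<le> 8 * ?a" .
    have "chi_square (mixture (pmf_of_set {1..s}) (\<lambda>k. V_law lam d (theta r \<delta> k))) (V_law lam d theta0)
       \<le> ennreal (8 * ?a / real s)"
      unfolding ch fs using x0 s bnd by (intro ennreal_chi_bound) auto
    then show "chi_square (mixture (pmf_of_set {1..s}) (\<lambda>k. V_law lam d (theta r \<delta> k))) (V_law lam d theta0)
       \<le> ennreal (8 * lam * \<delta>^2 * r / s)" by (simp add: mult.assoc)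
  }
qed

end
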